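(* For every integer $n\ge 1$ and every positive divisor $k$ of $n$, $F_{n,k}=1$.
   Context: Define maps $G,S:\mathbb Z^2\to\mathbb Z^2$ by $G(x,y)=(x+y,y)$ and $S(x,y)=(3x-2y+1,\,2x-y+1)$. Define the array $(F_{n,k})_{n,k\ge 0}$ by $F_{0,0}=1$ and, for $(n,k)\neq(0,0)$, $F_{n,k}$ is the number of finite words $w=w_1w_2\cdots w_m$ ($m\ge 0$) over the alphabet $\{G,S\}$ with $w_1\circ w_2\circ\cdots\circ w_m(1,1)=(n,k)$ (the empty word acts as the identity). Equivalently: start with all entries $0$, set $F_{0,0}=1$ and $F_{1,1}=1$, and thereafter, whenever an entry $F_{n,k}$ with $n\ge 1$ changes its value, increase $F_{n+k,k}$ and $F_{3n+1-2k,\,2n+1-k}$ by $1$. *)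

theory Defs
  imports Main
begin

datatype letter = LG | LS

fun act :: "letter \<Rightarrow> int \<times> int \<Rightarrow> int \<times> int" where
  "act LG (x, y) = (x + y, y)"
| "act LS (x, y) = (3*x - 2*y + 1, 2*x - y + 1)"

definition word_eval :: "letter list \<Rightarrow> int \<times> int \<Rightarrow> int \<times> int" where
  "word_eval w p = foldr act w p"

definition F :: "nat \<Rightarrow> nat \<Rightarrow> nat" where
  "F n k = (if n = 0 \<and> k = 0 then 1
            else card {w. word_eval w (1, 1) = (int n, int k)})"

end

theory Submission
  imports Defs
begin

lemma we_cons: "word_eval (a # w) p = act a (word_eval w p)"
  by (simp add: word_eval_def)

lemma region: "word_eval w (1, 1) = (x, y) \<Longrightarrow> y \<ge> 1 \<and> x \<ge> y"
proof (induction w arbitrary: x y)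
  case Nil
  then show ?case by (simp add: word_eval_def)
next
  case (Cons a w)
  obtain u v where uv: "word_eval w (1, 1) = (u, v)" by (cases "word_eval w (1, 1)")
  from Cons.IH[OF uv] have "v \<ge> 1 \<and> u \<ge> v" .
  with Cons.prems uv show ?case by (cases a) (auto simp: we_cons)
qed

lemma uniq: "word_eval w (1, 1) = word_eval w' (1, 1) \<Longrightarrow> w = w'"
proof (induction w arbitrary: w')
  case Nil
  show ?case
  proof (cases w')
    case (Cons b u)
    obtain x y where xy: "word_eval u (1, 1) = (x, y)" by (cases "word_eval u (1, 1)")
    from region[OF xy] Nil.prems Cons xy show ?thesis
      by (cases b) (auto simp: we_cons word_eval_def)
  qed simp
next
  case (Cons a w)
  obtain x y where xy: "word_eval w (1, 1) = (x, y)" by (cases "word_eval w (1, 1)")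
  note r = region[OF xy]
  show ?case
  proof (cases w')
    case Nil
    from r Cons.prems Nil xy show ?thesis
      by (cases a) (auto simp: we_cons word_eval_def)
  next
    case (Cons b u)
    obtain x' y' where xy': "word_eval u (1, 1) = (x', y')" by (cases "word_eval u (1, 1)")
    note r' = region[OF xy']
    have eq: "act a (x, y) = act b (x', y')" using Cons.prems Cons xy xy' by (simp add: we_cons)
    have ab: "a = b"
      using eq r r' by (cases a; cases b) auto
    have "(x, y) = (x', y')" using eq ab by (cases a) auto
    then have "w = u" using Cons.IH xy xy' by simp
    then show ?thesis using ab Cons by simp
  qed
qed

lemma evS: "word_eval (replicate j LS) (1, 1) = (1 + int j, 1 + int j)"
  by (induction j) (auto simp: we_cons, simp add: word_eval_def)

lemma evG: "word_eval (replicate i LG) (x, y) = (x + int i * y, y)"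
  by (induction i) (auto simp: we_cons algebra_simps, simp add: word_eval_def)

lemma we_app: "word_eval (u @ v) p = word_eval u (word_eval v p)"
  by (simp add: word_eval_def)

theorem proposition7:
  fixes n k :: nat
  assumes "n \<ge> 1" and "k > 0" and "k dvd n"
  shows "F n k = 1"
proof -
  obtain m where m: "n = k * m" using assms(3) by blast
  with assms have "m \<ge> 1" by (cases m) auto
  define w0 where "w0 = replicate (m - 1) LG @ replicate (k - 1) LS"
  have "word_eval w0 (1, 1) = (int n, int k)"
  proof -
    have "word_eval w0 (1, 1) = (int k + int (m - 1) * int k, int k)"
      using assms(2) by (simp add: w0_def we_app evS evG of_nat_diff)
    also have "\<dots> = (int n, int k)" using m \<open>m \<ge> 1\<close>
      by (simp add: of_nat_diff algebra_simps)
    finally show ?thesis .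
  qed
  then have "{w. word_eval w (1, 1) = (int n, int k)} = {w0}"
    using uniq by auto
  then show ?thesis using assms(1) by (simp add: F_def)
qed

end
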